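(* Let $m\ge d\ge1$, $\lambda=d/m$, and let $p$ be a monic polynomial of degree $d$ with nonnegative roots. Then \[ y^{m-d}p(xy)=e^{-\widehat{\mathcal R}(\partial_x\partial_y)}\{y^mx^d\},\qquad\text{where }\ \widehat{\mathcal R}(s):=d\int_0^s\frac{\mathcal R^{d,\lambda}_{\mathbb{S}p}\big(\frac{u}{md}\big)}{u}\,du . \] In particular $p$ is uniquely determined by $\mathcal R^{d,\lambda}_{\mathbb{S}p}$.
   Context: Write $p=\sum_{i=0}^d(-1)^ip_ix^{d-i}$ and $E_p(s)=\sum_{i=0}^d(-1)^i(md)^i\frac{(m-i)!(d-i)!}{m!d!}p_is^i$; $\mathcal R^{d,\lambda}_{\mathbb{S}p}(s)$ is the polynomial of degree $\le d$ (with zero constant term) agreeing with $-\frac sd\frac d{ds}\log E_p(s)$ mod $s^{d+1}$. The exponential of a differential operator is defined by its power series; only finitely many terms act nontrivially on $y^mx^d$. *)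

theory Defs
  imports "HOL-Computational_Algebra.Computational_Algebra"
begin

text \<open>Bivariate real polynomials in x and y are represented as real poly poly:
  the outer variable is x, the coefficients are polynomials in y.\<close>

definition varX :: "real poly poly" where "varX = [:0, 1:]"
definition varY :: "real poly poly" where "varY = [:[:0, 1:]:]"

definition dxdy :: "real poly poly \<Rightarrow> real poly poly" where
  "dxdy f = map_poly pderiv (pderiv f)"

text \<open>Action of the differential operator c(dxdy) for a formal power series c:
  sum of c_k (dxdy)^k f; terms with k > deg_x f vanish.\<close>
definition fps_diff_op :: "real fps \<Rightarrow> real poly poly \<Rightarrow> real poly poly" where
  "fps_diff_op c f = (\<Sum>k\<le>degree f. smult [:c $ k:] ((dxdy ^^ k) f))"

text \<open>The coefficients p_i with p = sum_i (-1)^i p_i x^(d-i).\<close>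
definition pcoef :: "nat \<Rightarrow> real poly \<Rightarrow> nat \<Rightarrow> real" where
  "pcoef d p i = (-1) ^ i * coeff p (d - i)"

definition Ep :: "nat \<Rightarrow> nat \<Rightarrow> real poly \<Rightarrow> real poly" where
  "Ep d m p = (\<Sum>i\<le>d. monom ((-1) ^ i * (real (m * d)) ^ i
      * (fact (m - i) * fact (d - i) / (fact m * fact d)) * pcoef d p i) i)"

text \<open>R^{d,lambda}_{Sp} with lambda = d/m: truncation mod s^(d+1) of -(s/d) (log E_p)'.\<close>
definition RS :: "nat \<Rightarrow> nat \<Rightarrow> real poly \<Rightarrow> real poly" where
  "RS d m p = (let E = fps_of_poly (Ep d m p);
                   L = - fps_const (1 / real d) * fps_X * fps_deriv E / E
               in (\<Sum>k\<le>d. monom (L $ k) k))"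

text \<open>Rhat(s) = d * integral_0^s R(u/(md))/u du, for R with zero constant term:
  coefficient k is d r_k / (k (md)^k).\<close>
definition Rhat :: "nat \<Rightarrow> nat \<Rightarrow> real poly \<Rightarrow> real poly" where
  "Rhat d m R = (\<Sum>k\<in>{1..degree R}. monom (real d * coeff R k / (real k * (real (m * d)) ^ k)) k)"

definition nonneg_rooted :: "real poly \<Rightarrow> bool" where
  "nonneg_rooted p \<longleftrightarrow> (\<forall>z::complex. poly (map_poly of_real p) z = 0 \<longrightarrow> Im z = 0 \<and> Re z \<ge> 0)"

end

theory Submission
  imports Defs
begin

lemma rec_unique:
  fixes F G w :: "nat \<Rightarrow> real"
  assumes "F 0 = G 0" "w 0 = 0"
    and hF: "\<And>k. k \<le> d \<Longrightarrow> real k * F k = - (\<Sum>j=0..k. w j * F (k-j))"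
    and hG: "\<And>k. k \<le> d \<Longrightarrow> real k * G k = - (\<Sum>j=0..k. w j * G (k-j))"
  shows "k \<le> d \<Longrightarrow> F k = G k"
proof (induction k rule: less_induct)
  case (less k)
  show ?case
  proof (cases "k = 0")
    case True then show ?thesis using assms(1) by simp
  next
    case False
    have "(\<Sum>j=0..k. w j * F (k-j)) = (\<Sum>j=0..k. w j * G (k-j))"
    proof (rule sum.cong[OF refl])
      fix j assume "j \<in> {0..k}"
      then show "w j * F (k-j) = w j * G (k-j)"
        using less False assms(2) by (cases "j = 0") auto
    qed
    then have "real k * F k = real k * G k" using hF[OF less(2)] hG[OF less(2)] by simp
    then show ?thesis using False by simp
  qed
qed

lemma XD_nth: "(fps_X * fps_deriv (f::real fps)) $ k = real k * f $ k"
  by (cases k) auto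

lemma G_rec:
  fixes H :: "real fps"
  assumes "H $ 0 = 0"
  shows "real k * (fps_exp 1 oo (-H)) $ k = - (\<Sum>j=0..k. (fps_X * fps_deriv H) $ j * (fps_exp 1 oo (-H)) $ (k-j))"
proof -
  let ?G = "fps_exp 1 oo (-H)"
  have "fps_deriv ?G = (fps_exp 1 oo (-H)) * (- fps_deriv H)"
    using assms by (simp add: fps_compose_deriv)
  then have "fps_X * fps_deriv ?G = - ((fps_X * fps_deriv H) * ?G)"
    by (simp add: algebra_simps)
  then have "(fps_X * fps_deriv ?G) $ k = - ((fps_X * fps_deriv H) * ?G) $ k" by simp
  then show ?thesis unfolding XD_nth fps_neg_nth by (subst (asm) fps_mult_nth) (simp only: XD_nth)
qed

lemma E_rec:
  fixes E :: "real fps" and d :: nat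
  assumes "E $ 0 = 1" "d \<ge> 1"
  defines "L \<equiv> - fps_const (1 / real d) * fps_X * fps_deriv E / E"
  shows "real k * E $ k = - real d * (\<Sum>j=0..k. L $ j * E $ (k-j))"
    and "L $ 0 = 0"
proof -
  have "L * E = - fps_const (1 / real d) * fps_X * fps_deriv E"
    unfolding L_def using assms(1) by (simp add: fps_divide_unit inverse_mult_eq_1 mult.assoc)
  then have "(L * E) $ k = - (1 / real d) * (fps_X * fps_deriv E) $ k" for k
    by (simp add: mult.assoc del: fps_X_mult_nth)
  then have eq: "(fps_X * fps_deriv E) $ k = - real d * (L * E) $ k" for k
    using assms(2) by (simp del: fps_X_mult_nth)
  show "real k * E $ k = - real d * (\<Sum>j=0..k. L $ j * E $ (k-j))"
    using eq[of k] unfolding XD_nth by (simp add: fps_mult_nth)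
  show "L $ 0 = 0" using eq[of 0] assms by (simp add: fps_mult_nth)
qed

lemma coeff_Ep:
  assumes "d \<le> m"
  shows "coeff (Ep d m p) k = (if k \<le> d then (real(m*d))^k * (fact(m-k)*fact(d-k)/(fact m*fact d)) * coeff p (d-k) else 0)"
proof -
  have "coeff (Ep d m p) k = (\<Sum>i\<le>d. if i = k then (-1) ^ i * (real (m * d)) ^ i
      * (fact (m - i) * fact (d - i) / (fact m * fact d)) * pcoef d p i else 0)"
    unfolding Ep_def coeff_sum coeff_monom by (intro sum.cong) auto
  also have "\<dots> = (if k \<le> d then (-1) ^ k * (real (m * d)) ^ k
      * (fact (m - k) * fact (d - k) / (fact m * fact d)) * pcoef d p k else 0)"
    by (simp add: sum.delta)
  also have "\<dots> = (if k \<le> d then (real(m*d))^k * (fact(m-k)*fact(d-k)/(fact m*fact d)) * coeff p (d-k) else 0)"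
  proof -
    have "(-1::real)^k * (-1)^k = 1" by (simp add: power_mult_distrib[symmetric])
    then show ?thesis unfolding pcoef_def by (auto simp: algebra_simps)
  qed
  finally show ?thesis .
qed

lemma coeff_RS:
  "coeff (RS d m p) j = (if j \<le> d then (- fps_const (1 / real d) * fps_X * fps_deriv (fps_of_poly (Ep d m p)) / fps_of_poly (Ep d m p)) $ j else 0)"
  unfolding RS_def Let_def coeff_sum coeff_monom by (simp add: sum.delta)

lemma degree_RS: "degree (RS d m p) \<le> d"
  by (rule degree_le) (simp add: coeff_RS)

lemma coeff_Rhat:
  "coeff (Rhat d m R) j = (if j = 0 then 0 else real d * coeff R j / (real j * (real (m * d)) ^ j))"
proof -
  have "coeff (Rhat d m R) j = (\<Sum>k\<in>{1..degree R}. if k = j then real d * coeff R k / (real k * (real (m * d)) ^ k) else 0)"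
    unfolding Rhat_def coeff_sum coeff_monom by (intro sum.cong) auto
  also have "\<dots> = (if j \<in> {1..degree R} then real d * coeff R j / (real j * (real (m * d)) ^ j) else 0)"
    by (simp add: sum.delta)
  also have "\<dots> = (if j = 0 then 0 else real d * coeff R j / (real j * (real (m * d)) ^ j))"
    using coeff_eq_0[of R j] by auto
  finally show ?thesis .
qed

lemma G_coeff:
  assumes "1 \<le> d" "d \<le> m" "coeff p d = 1" "k \<le> d"
  shows "(fps_exp 1 oo (- fps_of_poly (Rhat d m (RS d m p)))) $ k = coeff (Ep d m p) k / (real (m*d)) ^ k"
proof -
  define E where "E = fps_of_poly (Ep d m p)"
  define L where "L = - fps_const (1 / real d) * fps_X * fps_deriv E / E"
  define H where "H = fps_of_poly (Rhat d m (RS d m p))"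
  define w where "w j = (fps_X * fps_deriv H) $ j" for j
  define F where "F k = E $ k / (real (m*d)) ^ k" for k
  define G where "G k = (fps_exp 1 oo (-H)) $ k" for k
  have E0: "E $ 0 = 1" unfolding E_def using assms by (simp add: coeff_Ep)
  have L0: "L $ 0 = 0" using E_rec(2)[OF E0 assms(1)] unfolding L_def .
  have H0: "H $ 0 = 0" unfolding H_def by (simp add: coeff_Rhat)
  have md: "real (m*d) \<noteq> 0" using assms by simp
  have w: "w j = real d * L $ j / (real (m*d)) ^ j" if "j \<le> d" for j
    using that L0 unfolding w_def XD_nth H_def E_def L_def
    by (auto simp: coeff_Rhat coeff_RS)
  have "F k = G k"
  proof (rule rec_unique[of F G w d k])
    show "F 0 = G 0" using E0 by (simp add: F_def G_def)
    show "w 0 = 0" by (simp add: w_def XD_nth)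
    show "real k * G k = - (\<Sum>j=0..k. w j * G (k-j))" for k
      unfolding G_def w_def by (rule G_rec[OF H0])
    show "real k * F k = - (\<Sum>j=0..k. w j * F (k-j))" if "k \<le> d" for k
    proof -
      have "real k * F k = (real k * E $ k) / (real (m*d)) ^ k" by (simp add: F_def)
      also have "\<dots> = - real d * (\<Sum>j=0..k. L $ j * E $ (k-j)) / (real (m*d)) ^ k"
        using E_rec(1)[OF E0 assms(1)] unfolding L_def by simp
      also have "\<dots> = - (\<Sum>j=0..k. w j * F (k-j))"
      proof -
        have "real d * (L $ j * E $ (k-j)) / (real (m*d)) ^ k = w j * F (k-j)" if "j \<in> {0..k}" for j
        proof -
          have "(real (m*d)) ^ k = (real (m*d)) ^ j * (real (m*d)) ^ (k-j)"
            using that by (simp add: power_add[symmetric])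
          then show ?thesis using that \<open>k \<le> d\<close> md by (simp add: w F_def)
        qed
        then have "real d * (\<Sum>j=0..k. L $ j * E $ (k-j)) / (real (m*d)) ^ k = (\<Sum>j=0..k. w j * F (k-j))"
          by (simp add: sum_distrib_left sum_divide_distrib)
        then show ?thesis by simp
      qed
      finally show ?thesis .
    qed
  qed (use assms in auto)
  then show ?thesis by (simp add: F_def G_def E_def H_def)
qed

lemma dxdy_mon: "dxdy (monom (monom c a) b) = monom (monom (c * real b * real a) (a-1)) (b-1)"
  unfolding dxdy_def pderiv_monom
  by (simp add: map_poly_monom of_nat_poly smult_monom pderiv_smult pderiv_monom mult.commute mult.left_commute)

lemma iter_mon: "(dxdy ^^ k) (monom (monom 1 m) d) = monom (monom (\<Prod>i<k. real (m-i) * real (d-i)) (m-k)) (d-k)"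
proof (induction k)
  case 0 then show ?case by simp
next
  case (Suc k)
  then show ?case by (simp add: dxdy_mon algebra_simps)
qed

lemma fact_prod: "k \<le> m \<Longrightarrow> fact (m-k) * (\<Prod>i<k. real (m-i)) = fact m"
proof (induction k)
  case 0 then show ?case by simp
next
  case (Suc k)
  have "m - k = Suc (m - Suc k)" using Suc by simp
  then have "fact (m-k) = real (m-k) * (fact (m - Suc k) :: real)" by (metis fact_Suc of_nat_Suc)
  have "fact (m - Suc k) * (\<Prod>i<Suc k. real (m-i)) = (real (m-k) * fact (m - Suc k)) * (\<Prod>i<k. real (m-i))"
    by (simp only: prod.lessThan_Suc mult_ac)
  also have "\<dots> = fact m" using Suc \<open>fact (m-k) = _\<close> by simp
  finally show ?case .
qed

lemma varX_pow: "varX ^ d = monom 1 d"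
  unfolding varX_def by (simp add: monom_altdef)

lemma const_pow: "[:q:] ^ m = [:q ^ m:]"
  by (induction m) (auto simp: mult.commute)

lemma varY_pow: "varY ^ m = monom (monom 1 m) 0"
  unfolding varY_def const_pow by (simp add: monom_altdef monom_0)

lemma varXY_pow: "(varX * varY) ^ i = monom (monom 1 i) i"
  by (simp add: power_mult_distrib varX_pow varY_pow mult_monom)

lemma smult_const_mon: "smult [:c:] (monom (monom a i) j) = monom (monom (c*a) i) j"
  by (simp add: smult_monom)

lemma RHS_form:
  "fps_diff_op c (varY ^ m * varX ^ d) = (\<Sum>k\<le>d. monom (monom (c $ k * (\<Prod>i<k. real (m-i) * real (d-i))) (m-k)) (d-k))"
proof -
  have e: "varY ^ m * varX ^ d = monom (monom 1 m) d"
    by (simp add: varX_pow varY_pow mult_monom)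
  show ?thesis unfolding fps_diff_op_def e
    by (simp add: iter_mon smult_const_mon degree_monom_eq)
qed

lemma LHS_form:
  assumes "degree p = d"
  shows "varY ^ (m - d) * poly (map_poly (\<lambda>a. [:[:a:]:]) p) (varX * varY)
     = (\<Sum>i\<le>d. monom (monom (coeff p i) (m-d+i)) i)"
proof -
  have deg: "degree (map_poly (\<lambda>a. [:[:a:]:]) p) = d"
    using assms by (subst degree_map_poly) auto
  have "poly (map_poly (\<lambda>a. [:[:a:]:]) p) (varX * varY) = (\<Sum>i\<le>d. [:[:coeff p i:]:] * monom (monom 1 i) i)"
    unfolding poly_altdef deg by (simp add: coeff_map_poly varXY_pow)
  also have "\<dots> = (\<Sum>i\<le>d. monom (monom (coeff p i) i) i)"
    by (intro sum.cong refl) (simp add: smult_monom)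
  finally show ?thesis
    by (simp add: sum_distrib_left varY_pow mult_monom)
qed

lemma identity:
  assumes "1 \<le> d" "d \<le> m" "degree p = d" "coeff p d = 1"
  shows "varY ^ (m - d) * poly (map_poly (\<lambda>a. [:[:a:]:]) p) (varX * varY)
           = fps_diff_op (fps_exp 1 oo (- fps_of_poly (Rhat d m (RS d m p)))) (varY ^ m * varX ^ d)"
proof -
  have "(\<Sum>i\<le>d. monom (monom (coeff p i) (m-d+i)) i) = (\<Sum>k\<le>d. monom (monom (coeff p (d-k)) (m-d+(d-k))) (d-k))"
    by (rule sum.reindex_bij_witness[of _ "\<lambda>k. d-k" "\<lambda>k. d-k"]) auto
  also have "\<dots> = (\<Sum>k\<le>d. monom (monom ((fps_exp 1 oo (- fps_of_poly (Rhat d m (RS d m p)))) $ k * (\<Prod>i<k. real (m-i) * real (d-i))) (m-k)) (d-k))"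
  proof (intro sum.cong refl)
    fix k assume k: "k \<in> {..d}"
    then have kd: "k \<le> d" by simp
    have md: "real (m*d) ^ k \<noteq> 0" using assms by simp
    have f1: "fact (m-k) * (\<Prod>i<k. real (m-i)) = fact m" using kd assms by (intro fact_prod) simp
    have f2: "fact (d-k) * (\<Prod>i<k. real (d-i)) = fact d" using kd by (intro fact_prod) simp
    have "(fps_exp 1 oo (- fps_of_poly (Rhat d m (RS d m p)))) $ k * (\<Prod>i<k. real (m-i) * real (d-i))
        = (fact(m-k)*fact(d-k)/(fact m*fact d)) * coeff p (d-k) * ((\<Prod>i<k. real (m-i)) * (\<Prod>i<k. real (d-i)))"
      using md kd assms(1,2) by (simp add: G_coeff[OF assms(1,2,4) kd] coeff_Ep[OF assms(2)] prod.distrib)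
    also have "\<dots> = coeff p (d-k) * ((fact(m-k) * (\<Prod>i<k. real (m-i))) * (fact(d-k) * (\<Prod>i<k. real (d-i)))) / (fact m*fact d)"
      by (simp add: field_simps)
    also have "\<dots> = coeff p (d-k)" unfolding f1 f2 by simp
    finally show "monom (monom (coeff p (d-k)) (m-d+(d-k))) (d-k) = monom (monom ((fps_exp 1 oo (- fps_of_poly (Rhat d m (RS d m p)))) $ k * (\<Prod>i<k. real (m-i) * real (d-i))) (m-k)) (d-k)"
      using kd assms by simp
  qed
  finally show ?thesis unfolding LHS_form[OF assms(3)] RHS_form .
qed

lemma coeff_LHS_sum:
  "j \<le> d \<Longrightarrow> coeff (coeff (\<Sum>i\<le>d. monom (monom (c i) (a+i)) i) j) (a+j) = (c j :: real)"
  by (simp add: coeff_sum coeff_monom sum.delta)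

lemma uniq:
  assumes "1 \<le> d" "d \<le> m" "degree p = d" "coeff p d = 1" "degree q = d" "coeff q d = 1"
    and "RS d m q = RS d m p"
  shows "q = p"
proof -
  have "(\<Sum>i\<le>d. monom (monom (coeff q i) (m-d+i)) i) = (\<Sum>i\<le>d. monom (monom (coeff p i) (m-d+i)) i)"
    using identity[OF assms(1,2,3,4)] identity[OF assms(1,2,5,6)] assms(7)
    unfolding LHS_form[OF assms(3)] LHS_form[OF assms(5)] by simp
  show ?thesis
  proof (rule poly_eqI)
    fix j
    show "coeff q j = coeff p j"
    proof (cases "j \<le> d")
      case True
      then show ?thesis using coeff_LHS_sum[OF True, of "coeff q" "m-d"] coeff_LHS_sum[OF True, of "coeff p" "m-d"]
        \<open>(\<Sum>i\<le>d. _) = _\<close> by simp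
    next
      case False
      then show ?thesis using assms by (simp add: coeff_eq_0)
    qed
  qed
qed

theorem mainTheorem15:
  fixes m d :: nat and p :: "real poly"
  assumes "1 \<le> d" and "d \<le> m"
    and "degree p = d" and "lead_coeff p = 1"
    and "nonneg_rooted p"
  shows "varY ^ (m - d) * poly (map_poly (\<lambda>a. [:[:a:]:]) p) (varX * varY)
           = fps_diff_op (fps_exp 1 oo (- fps_of_poly (Rhat d m (RS d m p)))) (varY ^ m * varX ^ d)
         \<and> (\<forall>q::real poly. degree q = d \<and> lead_coeff q = 1 \<and> nonneg_rooted q
               \<and> RS d m q = RS d m p \<longrightarrow> q = p)"
proof -
  have c: "coeff p d = 1" using assms(3,4) by simp
  show ?thesis
  proof
    show "varY ^ (m - d) * poly (map_poly (\<lambda>a. [:[:a:]:]) p) (varX * varY)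
           = fps_diff_op (fps_exp 1 oo (- fps_of_poly (Rhat d m (RS d m p)))) (varY ^ m * varX ^ d)"
      by (rule identity[OF assms(1,2,3) c])
    show "\<forall>q::real poly. degree q = d \<and> lead_coeff q = 1 \<and> nonneg_rooted q
               \<and> RS d m q = RS d m p \<longrightarrow> q = p"
      using uniq[OF assms(1,2,3) c] by auto
  qed
qed

end
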